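(* Let $V,W$ be sets of size $n$ and $\mathbf M$ a uniformly random perfect matching between $V$ and $W$. Let $A_0,\dots,A_s$ and $B_0,\dots,B_t$ be partitions of $V$ and $W$ into nonempty parts, $a_i=|A_i|$, $b_j=|B_j|$, where $s,t$ are fixed. Let $(e_{ij})_{0\le i\le s,0\le j\le t}$ be nonnegative integers with $\sum_je_{ij}=a_i$ for every $i$ and $\sum_ie_{ij}=b_j$ for every $j$. Write $\mu_{ij}=a_ib_j/n$, $e_{ij}=\mu_{ij}(1+\epsilon_{ij})$, $E_{ij}$ for the number of edges of $\mathbf M$ between $A_i$ and $B_j$, and \[\chi=n^{-1/2}\Big(\frac{\prod_ia_i\prod_jb_j}{\prod_{ij:e_{ij}\ne0}e_{ij}}\Big)^{1/2}.\] Then \[\mathbb{P}\Big(\bigcap_{i,j}\{E_{ij}=e_{ij}\}\Big)\asymp\chi\cdot\exp\Big(-\sum_{i,j}\mu_{ij}\big[(1+\epsilon_{ij})\log(1+\epsilon_{ij})-\epsilon_{ij}\big]\Big),\] with the convention that the bracket equals $1$ when $\epsilon_{ij}=-1$, and where the implied constants depend only on $s,t$.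
   Context: $f\asymp g$ means $f\le Cg$ and $g\le Cf$ for a constant $C$ independent of $n$. Logarithms are natural. *)

theory Defs
  imports "HOL-Analysis.Analysis" "HOL-Library.FuncSet"
begin

definition is_partition :: "'a set \<Rightarrow> nat \<Rightarrow> (nat \<Rightarrow> 'a set) \<Rightarrow> bool" where
  "is_partition V s A \<longleftrightarrow>
     (\<forall>i\<le>s. A i \<noteq> {}) \<and>
     (\<forall>i\<le>s. \<forall>j\<le>s. i \<noteq> j \<longrightarrow> A i \<inter> A j = {}) \<and>
     (\<Union>i\<le>s. A i) = V"

text \<open>Perfect matchings between V and W, encoded as bijections V to W
  (extensional outside V so that they are counted correctly).\<close>
definition perfect_matchings :: "'a set \<Rightarrow> 'b set \<Rightarrow> ('a \<Rightarrow> 'b) set" where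
  "perfect_matchings V W = {f \<in> V \<rightarrow>\<^sub>E W. bij_betw f V W}"

definition edges_between :: "('a \<Rightarrow> 'b) \<Rightarrow> 'a set \<Rightarrow> 'b set \<Rightarrow> nat" where
  "edges_between f A B = card {v \<in> A. f v \<in> B}"

definition matching_prob ::
  "'a set \<Rightarrow> 'b set \<Rightarrow> nat \<Rightarrow> nat \<Rightarrow> (nat \<Rightarrow> 'a set) \<Rightarrow> (nat \<Rightarrow> 'b set) \<Rightarrow> (nat \<Rightarrow> nat \<Rightarrow> nat) \<Rightarrow> real" where
  "matching_prob V W s t A B e =
     real (card {f \<in> perfect_matchings V W. \<forall>i\<le>s. \<forall>j\<le>t. edges_between f (A i) (B j) = e i j})
     / real (card (perfect_matchings V W))"

definition bracket :: "real \<Rightarrow> real" where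
  "bracket x = (if x = -1 then 1 else (1 + x) * ln (1 + x) - x)"

end

theory Submission
  imports Defs
begin


lemma ln_lower: fixes x::real assumes "0 \<le> x" shows "2*x/(2+x) \<le> ln (1+x)"
proof -
  have "(\<lambda>x. ln (1+x) - 2*x/(2+x)) 0 \<le> (\<lambda>x. ln (1+x) - 2*x/(2+x)) x"
  proof (rule DERIV_nonneg_imp_nondecreasing[OF assms])
    fix y :: real assume y: "0 \<le> y" "y \<le> x"
    have "DERIV (\<lambda>x. ln (1+x) - 2*x/(2+x)) y :> (1/(1+y) - (2*(2+y) - 2*y)/(2+y)^2)"
      using y by (auto intro!: derivative_eq_intros simp: power2_eq_square)
    moreover have "1/(1+y) - (2*(2+y) - 2*y)/(2+y)^2 = y^2/((1+y)*(2+y)^2)"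
      using y by (simp add: divide_simps power2_eq_square) (simp add: algebra_simps)
    moreover have "y^2/((1+y)*(2+y)^2) \<ge> 0" using y by simp
    ultimately show "\<exists>d. DERIV (\<lambda>x. ln (1+x) - 2*x/(2+x)) y :> d \<and> d \<ge> 0" by auto
  qed
  thus ?thesis by simp
qed

lemma ln_upper: fixes x::real assumes "0 \<le> x" shows "ln (1+x) \<le> x - x^2/2 + x^3/3"
proof -
  have "(\<lambda>x. x - x^2/2 + x^3/3 - ln (1+x)) 0 \<le> (\<lambda>x. x - x^2/2 + x^3/3 - ln (1+x)) x"
  proof (rule DERIV_nonneg_imp_nondecreasing[OF assms])
    fix y :: real assume y: "0 \<le> y" "y \<le> x"
    have "DERIV (\<lambda>x. x - x^2/2 + x^3/3 - ln (1+x)) y :> (1 - y + y^2 - 1/(1+y))"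
      using y by (auto intro!: derivative_eq_intros simp: power2_eq_square)
    moreover have "1 - y + y^2 - 1/(1+y) = y^3/(1+y)"
      using y by (simp add: field_simps power2_eq_square power3_eq_cube)
    moreover have "y^3/(1+y) \<ge> 0" using y by simp
    ultimately show "\<exists>d. DERIV (\<lambda>x. x - x^2/2 + x^3/3 - ln (1+x)) y :> d \<and> d \<ge> 0" by auto
  qed
  thus ?thesis by simp
qed

definition L :: "nat \<Rightarrow> real" where
  "L m = ln (fact m) - (real m + 1/2) * ln (real m) + real m"

lemma L_step: assumes "m \<ge> 1"
  shows "L (Suc m) - L m = 1 - (real m + 1/2) * ln (1 + 1/real m)"
proof -
  have eq1: "ln (fact (Suc m)::real) = ln (real m + 1) + ln (fact m)"
    by (simp add: ln_mult add.commute)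
  have eq2: "ln (1 + 1/real m) = ln (real m + 1) - ln (real m)"
  proof -
    have "1 + 1/real m = (real m + 1)/real m" using assms by (simp add: field_simps)
    thus ?thesis using assms by (simp add: ln_div)
  qed
  show ?thesis unfolding L_def eq2 eq1 of_nat_Suc by (simp add: algebra_simps)
qed

lemma L_dec: assumes "m \<ge> 1" shows "L (Suc m) \<le> L m"
proof -
  have m: "real m \<ge> 1" using assms by simp
  have "2*(1/real m)/(2+1/real m) \<le> ln (1 + 1/real m)" by (rule ln_lower) simp
  moreover have "2*(1/real m)/(2+1/real m) = 1/(real m + 1/2)" using m by (simp add: field_simps)
  ultimately have "1 \<le> (real m + 1/2) * ln (1 + 1/real m)" using m by (simp add: field_simps)
  thus ?thesis using L_step[OF assms] by simp
qed

lemma L_inc: assumes "m \<ge> 1" shows "L m - 1/(2*real m) \<le> L (Suc m) - 1/(2*real (Suc m))"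
proof -
  have m: "real m \<ge> 1" using assms by simp
  define x where "x = 1/real m"
  have x: "0 < x" "x \<le> 1" using m by (auto simp: x_def)
  have "ln (1 + x) \<le> x - x^2/2 + x^3/3" by (rule ln_upper) (use x in simp)
  have rm: "real m + 1/2 = 1/x + 1/2" using m by (simp add: x_def)
  have "(real m + 1/2) * ln (1 + x) \<le> (1/x + 1/2) * (x - x^2/2 + x^3/3)"
    unfolding rm using x \<open>ln (1 + x) \<le> _\<close> by (intro mult_left_mono) auto
  also have "\<dots> = 1 + x^2/12 + x^3/6" using x by (simp add: field_simps power2_eq_square power3_eq_cube)
  also have "\<dots> \<le> 1 + x^2/(2*(1+x))"
  proof -
    have "(x^2/12 + x^3/6) * (2*(1+x)) \<le> x^2"
    proof -
      have "(x^2/12 + x^3/6) * (2*(1+x)) = x^2 * ((1 + 3*x + 2*x^2)/6)"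
        by (simp add: field_simps power2_eq_square power3_eq_cube)
      also have "\<dots> \<le> x^2 * 1"
      proof (intro mult_left_mono)
        have "x*x \<le> 1" using x by (simp add: mult_le_one)
        thus "(1 + 3*x + 2*x^2)/6 \<le> 1" using x by (simp add: power2_eq_square)
      qed simp
      finally show ?thesis by simp
    qed
    thus ?thesis using x by (simp add: field_simps)
  qed
  finally have *: "(real m + 1/2) * ln (1 + 1/real m) \<le> 1 + x^2/(2*(1+x))" by (simp add: x_def)
  have "x^2/(2*(1+x)) = 1/(2*real m) - 1/(2*real (Suc m))"
    using m by (simp add: x_def field_simps power2_eq_square)
  thus ?thesis using * L_step[OF assms] by simp
qed

lemma L_bounds: assumes "m \<ge> 1" shows "1/2 \<le> L m \<and> L m \<le> 1"
proof -
  have L1: "L 1 = 1" by (simp add: L_def)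
  have "L m \<le> L 1" using assms
  proof (induction m rule: dec_induct)
    case (step k) thus ?case using L_dec[of k] by simp
  qed simp
  moreover have "L 1 - 1/(2*real 1) \<le> L m - 1/(2*real m)" using assms
  proof (induction m rule: dec_induct)
    case (step k) thus ?case using L_inc[of k] by simp
  qed simp
  moreover have "1/(2*real m) \<ge> 0" by simp
  moreover have "1/(2*real (1::nat)) = (1/2::real)" by simp
  ultimately show ?thesis using L1 by linarith
qed

definition phi :: "nat \<Rightarrow> real" where
  "phi m = sqrt (real (max m 1)) * exp (real m * ln (real m) - real m)"

lemma phi_pos: "phi m > 0" by (simp add: phi_def)

lemma fact_phi: "1 \<le> fact m / phi m \<and> fact m / phi m \<le> exp 1"
proof (cases "m = 0")
  case True thus ?thesis by (simp add: phi_def)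
next
  case False
  hence m: "m \<ge> 1" by simp
  have "fact m / phi m = exp (L m)"
  proof -
    have "phi m = exp (ln (real m)/2 + real m * ln (real m) - real m)"
      using m by (simp add: phi_def exp_add exp_diff sqrt_def ln_sqrt[symmetric] max_def)
    moreover have "exp (ln (fact m) - (ln (real m)/2 + real m * ln (real m) - real m)) = exp (ln (fact m)) / exp (ln (real m)/2 + real m * ln (real m) - real m)"
      by (rule exp_diff)
    moreover have "(fact m :: real) = exp (ln (fact m))" by simp
    ultimately show ?thesis unfolding L_def
      by (simp add: algebra_simps)
  qed
  moreover have "exp (L m) \<ge> 1" using L_bounds[OF m] by simp
  moreover have "exp (L m) \<le> exp 1" using L_bounds[OF m] by simp
  ultimately show ?thesis by simp
qed




lemma prod_change:
  fixes h h' :: "'i \<Rightarrow> real"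
  assumes K: "finite K" "k \<in> K" and eq: "\<And>x. x \<in> K \<Longrightarrow> x \<noteq> k \<Longrightarrow> h' x = h x" and hk: "h k = c * h' k"
  shows "prod h K = c * prod h' K"
proof -
  have 1: "prod h K = h k * prod h (K - {k})" using K by (rule prod.remove)
  have 2: "prod h' K = h' k * prod h' (K - {k})" using K by (rule prod.remove)
  have 3: "prod h (K - {k}) = prod h' (K - {k})" by (rule prod.cong) (auto simp: eq)
  show ?thesis unfolding 1 2 3 hk by (simp only: mult.assoc)
qed

definition good :: "'a set \<Rightarrow> 'b set \<Rightarrow> nat \<Rightarrow> nat \<Rightarrow> (nat \<Rightarrow> 'a set) \<Rightarrow> (nat \<Rightarrow> 'b set) \<Rightarrow> (nat \<Rightarrow> nat \<Rightarrow> nat) \<Rightarrow> ('a \<Rightarrow> 'b) set" where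
  "good V W s t A B e = {f \<in> perfect_matchings V W. \<forall>i\<le>s. \<forall>j\<le>t. edges_between f (A i) (B j) = e i j}"

lemma count_good:
  fixes V :: "'a set" and W :: "'b set"
  assumes "finite V" "finite W"
    and "\<forall>i\<le>s. \<forall>i'\<le>s. i \<noteq> i' \<longrightarrow> A i \<inter> A i' = {}" "(\<Union>i\<le>s. A i) = V"
    and "\<forall>j\<le>t. \<forall>j'\<le>t. j \<noteq> j' \<longrightarrow> B j \<inter> B j' = {}" "(\<Union>j\<le>t. B j) = W"
    and "\<forall>i\<le>s. (\<Sum>j\<le>t. e i j) = card (A i)" "\<forall>j\<le>t. (\<Sum>i\<le>s. e i j) = card (B j)"
  shows "real (card (good V W s t A B e)) * (\<Prod>i\<le>s. \<Prod>j\<le>t. fact (e i j))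
         = (\<Prod>i\<le>s. fact (card (A i))) * (\<Prod>j\<le>t. fact (card (B j)))"
  using assms
proof (induction "card V" arbitrary: V W A B e)
  case 0
  have V: "V = {}" using "0.hyps" "0.prems"(1) by (metis card_0_eq)
  have A: "A i = {}" if "i \<le> s" for i using "0.prems" V that by auto
  have e: "e i j = 0" if "i \<le> s" "j \<le> t" for i j
  proof -
    have "(\<Sum>j\<le>t. e i j) = 0" using "0.prems" A that by simp
    thus ?thesis using that by simp
  qed
  have B: "B j = {}" if "j \<le> t" for j
  proof -
    have "finite (B j)" using "0.prems" that by (metis UN_upper atMost_iff finite_subset)
    moreover have "card (B j) = 0" using "0.prems" e that by (metis (no_types, lifting) atMost_iff sum.neutral)
    ultimately show ?thesis by simp
  qed
  have W: "W = {}" using "0.prems" B by auto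
  have "good V W s t A B e = {\<lambda>x. undefined}"
  proof -
    have "perfect_matchings V W = {\<lambda>x. undefined}" unfolding perfect_matchings_def V W by (auto simp: bij_betw_def)
    moreover have "edges_between (\<lambda>x. undefined) (A i) (B j) = e i j" if "i \<le> s" "j \<le> t" for i j
      using A[OF that(1)] e[OF that] by (simp add: edges_between_def)
    ultimately show ?thesis unfolding good_def by auto
  qed
  thus ?case using A B e by simp
next
  case (Suc k)
  obtain v where v: "v \<in> V" using Suc.hyps(2) by (metis card.empty nat.distinct(1) ex_in_conv)
  then obtain i0 where i0: "i0 \<le> s" "v \<in> A i0" using Suc.prems by auto
  define G where "G = good V W s t A B e"
  define S where "S w = {f \<in> G. f v = w}" for w
  define PE where "PE = (\<Prod>i\<le>s. \<Prod>j\<le>t. fact (e i j) :: real)"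
  define PA where "PA = (\<Prod>i\<le>s. fact (card (A i)) :: real)"
  define PB where "PB = (\<Prod>j\<le>t. fact (card (B j)) :: real)"
  have finA: "finite (A i)" if "i \<le> s" for i using Suc.prems that by (metis UN_upper atMost_iff finite_subset)
  have finB: "finite (B j)" if "j \<le> t" for j using Suc.prems that by (metis UN_upper atMost_iff finite_subset)
  have Gsub: "G \<subseteq> V \<rightarrow>\<^sub>E W" unfolding G_def good_def perfect_matchings_def by auto
  have finG: "finite G" using Gsub Suc.prems by (meson finite_PiE finite_subset)
  have G_UN: "G = (\<Union>w\<in>W. S w)"
  proof
    show "G \<subseteq> (\<Union>w\<in>W. S w)"
    proof
      fix f assume f: "f \<in> G"
      hence "f v \<in> W" using Gsub v by (auto simp: PiE_iff)
      thus "f \<in> (\<Union>w\<in>W. S w)" using f by (auto simp: S_def)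
    qed
  qed (auto simp: S_def)
  have "card G = (\<Sum>w\<in>W. card (S w))"
    unfolding G_UN using finG Suc.prems(2) by (intro card_UN_disjoint) (auto simp: S_def intro: finite_subset[OF _ finG])
  also have "\<dots> = (\<Sum>j\<le>t. \<Sum>w\<in>B j. card (S w))"
    using Suc.prems(5) finB by (subst Suc.prems(6)[symmetric], intro sum.UNION_disjoint) auto
  finally have cardG: "card G = (\<Sum>j\<le>t. \<Sum>w\<in>B j. card (S w))" .
  have key: "real (card (S w)) * PE = real (e i0 j0) * PA * PB / (real (card (A i0)) * real (card (B j0)))"
    if j0: "j0 \<le> t" "w \<in> B j0" for j0 w
  proof (cases "e i0 j0 = 0")
    case True
    have "S w = {}"
    proof (rule ccontr)
      assume "S w \<noteq> {}"
      then obtain f where f: "f \<in> G" "f v = w" by (auto simp: S_def)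
      hence "edges_between f (A i0) (B j0) = e i0 j0" unfolding G_def good_def using i0 j0 by auto
      moreover have "v \<in> {x \<in> A i0. f x \<in> B j0}" using i0 f j0 by auto
      hence "edges_between f (A i0) (B j0) > 0" unfolding edges_between_def using finA[OF i0(1)]
        by (auto simp: card_gt_0_iff)
      ultimately show False using True by simp
    qed
    thus ?thesis using True by simp
  next
    case False
    note e0 = False
    define V' where "V' = V - {v}"
    define W' where "W' = W - {w}"
    define A' where "A' = (\<lambda>i. A i - {v})"
    define B' where "B' = (\<lambda>j. B j - {w})"
    define e' where "e' = (\<lambda>i j. if i = i0 \<and> j = j0 then e i j - 1 else e i j)"
    have wW: "w \<in> W" using Suc.prems(6) j0 by auto
    have vA: "v \<notin> A i" if "i \<le> s" "i \<noteq> i0" for i using Suc.prems(3) i0 that by auto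
    have wB: "w \<notin> B j" if "j \<le> t" "j \<noteq> j0" for j using Suc.prems(5) j0 that by auto
    have cV': "k = card V'" using Suc.hyps(2) Suc.prems(1) v unfolding V'_def by simp
    have finA': "finite (A' i)" if "i \<le> s" for i using finA[OF that] unfolding A'_def by simp
    have IH: "real (card (good V' W' s t A' B' e')) * (\<Prod>i\<le>s. \<Prod>j\<le>t. fact (e' i j))
         = (\<Prod>i\<le>s. fact (card (A' i))) * (\<Prod>j\<le>t. fact (card (B' j)))"
    proof (rule Suc.hyps(1)[OF cV'])
      show "finite V'" "finite W'" using Suc.prems unfolding V'_def W'_def by auto
      show "\<forall>i\<le>s. \<forall>i'\<le>s. i \<noteq> i' \<longrightarrow> A' i \<inter> A' i' = {}" using Suc.prems(3) unfolding A'_def by auto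
      show "(\<Union>i\<le>s. A' i) = V'" using Suc.prems(4) unfolding A'_def V'_def by auto
      show "\<forall>j\<le>t. \<forall>j'\<le>t. j \<noteq> j' \<longrightarrow> B' j \<inter> B' j' = {}" using Suc.prems(5) unfolding B'_def by auto
      show "(\<Union>j\<le>t. B' j) = W'" using Suc.prems(6) unfolding B'_def W'_def by auto
      show "\<forall>i\<le>s. (\<Sum>j\<le>t. e' i j) = card (A' i)"
      proof (intro allI impI)
        fix i assume i: "i \<le> s"
        show "(\<Sum>j\<le>t. e' i j) = card (A' i)"
        proof (cases "i = i0")
          case True
          have s1: "(\<Sum>j\<le>t. e i j) = e i j0 + (\<Sum>j\<in>{..t}-{j0}. e i j)" using j0 by (simp add: sum.remove)
          have s2: "(\<Sum>j\<le>t. e' i j) = e' i j0 + (\<Sum>j\<in>{..t}-{j0}. e' i j)" using j0 by (simp add: sum.remove)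
          have s3: "(\<Sum>j\<in>{..t}-{j0}. e' i j) = (\<Sum>j\<in>{..t}-{j0}. e i j)" unfolding e'_def by (intro sum.cong) auto
          have s4: "card (A' i) = card (A i) - 1" using True i0 finA[OF i] unfolding A'_def by simp
          have s5: "e' i j0 = e i j0 - 1" using True unfolding e'_def by simp
          show ?thesis using s1 s2 s3 s4 s5 True e0 Suc.prems(7) i by auto
        next
          case False
          then show ?thesis using vA[OF i False] Suc.prems(7) i unfolding e'_def A'_def by auto
        qed
      qed
      show "\<forall>j\<le>t. (\<Sum>i\<le>s. e' i j) = card (B' j)"
      proof (intro allI impI)
        fix j assume j: "j \<le> t"
        show "(\<Sum>i\<le>s. e' i j) = card (B' j)"
        proof (cases "j = j0")
          case True
          have s1: "(\<Sum>i\<le>s. e i j) = e i0 j + (\<Sum>i\<in>{..s}-{i0}. e i j)" using i0 by (simp add: sum.remove)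
          have s2: "(\<Sum>i\<le>s. e' i j) = e' i0 j + (\<Sum>i\<in>{..s}-{i0}. e' i j)" using i0 by (simp add: sum.remove)
          have s3: "(\<Sum>i\<in>{..s}-{i0}. e' i j) = (\<Sum>i\<in>{..s}-{i0}. e i j)" unfolding e'_def by (intro sum.cong) auto
          have s4: "card (B' j) = card (B j) - 1" using True j0 finB[OF j] unfolding B'_def by simp
          have s5: "e' i0 j = e i0 j - 1" using True unfolding e'_def by simp
          show ?thesis using s1 s2 s3 s4 s5 True e0 Suc.prems(8) j by auto
        next
          case False
          then show ?thesis using wB[OF j False] Suc.prems(8) j unfolding e'_def B'_def by auto
        qed
      qed
    qed
    have edges: "edges_between (g(v:=w)) (A i) (B j) = edges_between g (A' i) (B' j) + (if i = i0 \<and> j = j0 then 1 else 0)"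
      if g: "g \<in> V' \<rightarrow>\<^sub>E W'" and ij: "i \<le> s" "j \<le> t" for g i j
    proof -
      have gx: "g x \<in> W'" if "x \<in> A i" "x \<noteq> v" for x
      proof -
        have "x \<in> V" using that ij Suc.prems(4) by auto
        thus ?thesis using g that unfolding V'_def by auto
      qed
      have "{x \<in> A i. (g(v:=w)) x \<in> B j} = {x \<in> A' i. g x \<in> B' j} \<union> (if i = i0 \<and> j = j0 then {v} else {})"
      proof (intro set_eqI iffI)
        fix x assume x: "x \<in> {x \<in> A i. (g(v:=w)) x \<in> B j}"
        show "x \<in> {x \<in> A' i. g x \<in> B' j} \<union> (if i = i0 \<and> j = j0 then {v} else {})"
        proof (cases "x = v")
          case True
          hence "i = i0" using x vA ij by auto
          moreover have "j = j0" using x True wB ij by auto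
          ultimately show ?thesis using True by simp
        next
          case False
          thus ?thesis using x gx[of x] unfolding A'_def B'_def W'_def by auto
        qed
      next
        fix x assume x: "x \<in> {x \<in> A' i. g x \<in> B' j} \<union> (if i = i0 \<and> j = j0 then {v} else {})"
        show "x \<in> {x \<in> A i. (g(v:=w)) x \<in> B j}"
          using x i0 j0 unfolding A'_def B'_def by (auto split: if_splits)
      qed
      moreover have "finite {x \<in> A' i. g x \<in> B' j}" using finA'[OF ij(1)] by simp
      moreover have "v \<notin> {x \<in> A' i. g x \<in> B' j}" unfolding A'_def by simp
      ultimately show ?thesis unfolding edges_between_def by (auto simp: card_insert_if)
    qed
    define G' where "G' = good V' W' s t A' B' e'"
    have Sw: "S w = (\<lambda>g. g(v:=w)) ` G'"
    proof
      show "S w \<subseteq> (\<lambda>g. g(v:=w)) ` G'"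
      proof
        fix f assume "f \<in> S w"
        hence f: "f \<in> V \<rightarrow>\<^sub>E W" "bij_betw f V W" "\<forall>i\<le>s. \<forall>j\<le>t. edges_between f (A i) (B j) = e i j" "f v = w"
          unfolding S_def G_def good_def perfect_matchings_def by auto
        define g where "g = f(v := undefined)"
        have fg: "f = g(v:=w)" using f(4) unfolding g_def by auto
        have gE: "g \<in> V' \<rightarrow>\<^sub>E W'"
        proof (rule PiE_I)
          fix x assume x: "x \<in> V'"
          hence "f x \<noteq> w" using f(2,4) v unfolding V'_def bij_betw_def inj_on_def by auto
          thus "g x \<in> W'" using x f(1) unfolding g_def V'_def W'_def by auto
        next
          fix x assume "x \<notin> V'"
          thus "g x = undefined" using f(1) unfolding g_def V'_def by auto
        qed
        have "bij_betw f V' W'" unfolding V'_def W'_def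
          by (rule bij_betw_DiffI[OF f(2)]) (use f(4) v wW in auto)
        hence gb: "bij_betw g V' W'" by (rule bij_betw_cong[THEN iffD1, rotated]) (auto simp: g_def V'_def)
        have "\<forall>i\<le>s. \<forall>j\<le>t. edges_between g (A' i) (B' j) = e' i j"
        proof (intro allI impI)
          fix i j assume ij: "i \<le> s" "j \<le> t"
          have "e i j = edges_between g (A' i) (B' j) + (if i = i0 \<and> j = j0 then 1 else 0)"
            using edges[OF gE ij] f(3) ij fg by simp
          thus "edges_between g (A' i) (B' j) = e' i j" unfolding e'_def by auto
        qed
        hence "g \<in> G'" using gE gb unfolding G'_def good_def perfect_matchings_def by auto
        thus "f \<in> (\<lambda>g. g(v:=w)) ` G'" using fg by auto
      qed
      show "(\<lambda>g. g(v:=w)) ` G' \<subseteq> S w"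
      proof
        fix f assume "f \<in> (\<lambda>g. g(v:=w)) ` G'"
        then obtain g where g: "g \<in> G'" and fg: "f = g(v:=w)" by auto
        have gE: "g \<in> V' \<rightarrow>\<^sub>E W'" and gb: "bij_betw g V' W'"
          and ge: "\<forall>i\<le>s. \<forall>j\<le>t. edges_between g (A' i) (B' j) = e' i j"
          using g unfolding G'_def good_def perfect_matchings_def by auto
        have fE: "f \<in> V \<rightarrow>\<^sub>E W"
        proof (rule PiE_I)
          fix x assume "x \<in> V" thus "f x \<in> W" using gE wW unfolding fg V'_def W'_def by auto
        next
          fix x assume "x \<notin> V" thus "f x = undefined" using gE v unfolding fg V'_def by auto
        qed
        have "bij_betw f V' W'" using gb by (rule bij_betw_cong[THEN iffD1, rotated]) (auto simp: fg V'_def)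
        hence "bij_betw f (V' \<union> {v}) (W' \<union> {f v})"
          by (intro notIn_Un_bij_betw) (auto simp: fg V'_def W'_def)
        moreover have "V' \<union> {v} = V" "W' \<union> {f v} = W" using v wW by (auto simp: V'_def W'_def fg)
        ultimately have fb: "bij_betw f V W" by simp
        have "\<forall>i\<le>s. \<forall>j\<le>t. edges_between f (A i) (B j) = e i j"
        proof (intro allI impI)
          fix i j assume ij: "i \<le> s" "j \<le> t"
          show "edges_between f (A i) (B j) = e i j"
            using edges[OF gE ij] ge ij e0 unfolding fg e'_def by auto
        qed
        thus "f \<in> S w" using fE fb unfolding S_def G_def good_def perfect_matchings_def by (auto simp: fg)
      qed
    qed
    have inj: "inj_on (\<lambda>g. g(v:=w)) G'"
    proof (rule inj_onI)
      fix g1 g2 assume g: "g1 \<in> G'" "g2 \<in> G'" "g1(v:=w) = g2(v:=w)"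
      have "g1 v = undefined" "g2 v = undefined"
        using g(1,2) unfolding G'_def good_def perfect_matchings_def V'_def by (auto simp: PiE_def extensional_def)
      thus "g1 = g2" using g(3) by (metis fun_upd_idem fun_upd_upd)
    qed
    have cardS: "card (S w) = card G'" unfolding Sw using inj by (rule card_image)
    have PE: "PE = real (e i0 j0) * (\<Prod>i\<le>s. \<Prod>j\<le>t. fact (e' i j))"
      unfolding PE_def
    proof (rule prod_change[of _ i0])
      show "(\<Prod>j\<le>t. fact (e i0 j)) = real (e i0 j0) * (\<Prod>j\<le>t. fact (e' i0 j))"
      proof (rule prod_change[of _ j0])
        show "fact (e i0 j0) = real (e i0 j0) * fact (e' i0 j0)"
          using e0 unfolding e'_def by (simp add: fact_reduce)
      qed (use j0 in \<open>auto simp: e'_def\<close>)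
    qed (use i0 in \<open>auto simp: e'_def\<close>)
    have PA: "PA = real (card (A i0)) * (\<Prod>i\<le>s. fact (card (A' i)))"
      unfolding PA_def
    proof (rule prod_change[of _ i0])
      have "card (A i0) > 0" using i0 finA by (auto simp: card_gt_0_iff)
      moreover have "card (A' i0) = card (A i0) - 1" using i0 finA[OF i0(1)] unfolding A'_def by simp
      ultimately show "fact (card (A i0)) = real (card (A i0)) * fact (card (A' i0))"
        by (simp add: fact_reduce)
    qed (use i0 vA in \<open>auto simp: A'_def\<close>)
    have PB: "PB = real (card (B j0)) * (\<Prod>j\<le>t. fact (card (B' j)))"
      unfolding PB_def
    proof (rule prod_change[of _ j0])
      have "card (B j0) > 0" using j0 finB by (auto simp: card_gt_0_iff)
      moreover have "card (B' j0) = card (B j0) - 1" using j0 finB[OF j0(1)] unfolding B'_def by simp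
      ultimately show "fact (card (B j0)) = real (card (B j0)) * fact (card (B' j0))"
        by (simp add: fact_reduce)
    qed (use j0 wB in \<open>auto simp: B'_def\<close>)
    have apos: "card (A i0) > 0" using i0 finA by (auto simp: card_gt_0_iff)
    have bpos: "card (B j0) > 0" using j0 finB by (auto simp: card_gt_0_iff)
    show ?thesis unfolding cardS PE PA PB using IH[folded G'_def] apos bpos
      by (simp add: field_simps)
  qed
  have "real (card G) * PE = (\<Sum>j\<le>t. \<Sum>w\<in>B j. real (card (S w)) * PE)"
    unfolding cardG by (simp add: sum_distrib_right)
  also have "\<dots> = (\<Sum>j\<le>t. real (e i0 j) * PA * PB / real (card (A i0)))"
  proof (rule sum.cong[OF refl])
    fix j assume j: "j \<in> {..t}"
    have "(\<Sum>w\<in>B j. real (card (S w)) * PE) = (\<Sum>w\<in>B j. real (e i0 j) * PA * PB / (real (card (A i0)) * real (card (B j))))"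
      using key j by (intro sum.cong) auto
    also have "\<dots> = real (e i0 j) * PA * PB / real (card (A i0))"
    proof (cases "card (B j) = 0")
      case True
      have "e i0 j \<le> (\<Sum>i\<le>s. e i j)" using i0 by (intro member_le_sum) auto
      hence "e i0 j = 0" using True Suc.prems j by auto
      thus ?thesis by simp
    next
      case False thus ?thesis by simp
    qed
    finally show "(\<Sum>w\<in>B j. real (card (S w)) * PE) = real (e i0 j) * PA * PB / real (card (A i0))" .
  qed
  also have "\<dots> = (\<Sum>j\<le>t. real (e i0 j)) * PA * PB / real (card (A i0))"
    by (simp add: sum_distrib_right sum_divide_distrib)
  also have "(\<Sum>j\<le>t. real (e i0 j)) = real (card (A i0))"
    using Suc.prems i0 by (metis of_nat_sum)
  also have "real (card (A i0)) * PA * PB / real (card (A i0)) = PA * PB"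
  proof -
    have "card (A i0) > 0" using i0 finA by (auto simp: card_gt_0_iff)
    thus ?thesis by simp
  qed
  finally show ?case unfolding G_def PE_def PA_def PB_def .
qed




lemma sqrt_prod: "sqrt (prod f A) = (\<Prod>x\<in>A. sqrt (f x))"
  by (induction A rule: infinite_finite_induct) (auto simp: real_sqrt_mult)

definition X :: "nat \<Rightarrow> real" where "X m = real m * ln (real m)"

lemma card_PM:
  assumes "finite V" "finite W" "card V = n" "card W = n"
  shows "card (perfect_matchings V W) = fact n"
proof -
  have c0: "card {..0::nat} = 1" by simp
  have "good V W 0 0 (\<lambda>_. V) (\<lambda>_. W) (\<lambda>_ _. n) = perfect_matchings V W"
  proof -
    have "edges_between f V W = n" if "f \<in> perfect_matchings V W" for f
    proof -
      have "{v \<in> V. f v \<in> W} = V" using that unfolding perfect_matchings_def by auto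
      thus ?thesis using assms unfolding edges_between_def by simp
    qed
    thus ?thesis unfolding good_def by auto
  qed
  moreover have "real (card (good V W 0 0 (\<lambda>_. V) (\<lambda>_. W) (\<lambda>_ _. n))) * (\<Prod>i\<le>0::nat. \<Prod>j\<le>0::nat. fact ((\<lambda>_ _. n) i j))
         = (\<Prod>i\<le>0::nat. fact (card ((\<lambda>_. V) i))) * (\<Prod>j\<le>0::nat. fact (card ((\<lambda>_. W) j)))"
    by (rule count_good[where V=V and W=W and s=0 and t=0 and A="\<lambda>_. V" and B="\<lambda>_. W" and e="\<lambda>_ _. n"])
       (use assms in \<open>auto simp: atMost_0\<close>)
  ultimately have "real (card (perfect_matchings V W)) * fact n = fact n * fact n" using assms unfolding atMost_0 by simp
  hence "real (card (perfect_matchings V W)) = fact n" by simp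
  thus ?thesis by (metis of_nat_eq_iff of_nat_fact)
qed




lemma term_eq:
  fixes a b nn :: real and k :: nat
  assumes a: "a > 0" and b: "b > 0" and nn: "nn > 0"
  shows "(a*b/nn) * bracket (real k/(a*b/nn) - 1)
       = X k - real k * ln a - real k * ln b + real k * ln nn - real k + a*b/nn"
proof (cases "k = 0")
  case True thus ?thesis by (simp add: bracket_def X_def)
next
  case False
  define mu where "mu = a*b/nn"
  have mu: "mu > 0" using a b nn by (simp add: mu_def)
  have k: "real k > 0" using False by simp
  have ne: "real k / mu - 1 \<noteq> -1" using k mu by simp
  have lnmu: "ln mu = ln a + ln b - ln nn" unfolding mu_def using a b nn by (simp add: ln_div ln_mult)
  have lnk: "ln (real k / mu) = ln (real k) - ln mu" using k mu by (simp add: ln_div)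
  have "mu * bracket (real k/mu - 1) = mu * ((real k / mu) * ln (real k / mu) - (real k/mu - 1))"
    using ne unfolding bracket_def by simp
  also have "\<dots> = real k * ln (real k / mu) - real k + mu" using mu by (simp add: field_simps)
  also have "\<dots> = X k - real k * ln a - real k * ln b + real k * ln nn - real k + mu"
    unfolding lnk lnmu X_def by (simp add: algebra_simps)
  finally show ?thesis unfolding mu_def .
qed

lemma F_bounds: "1 \<le> fact m / phi m" "fact m / phi m \<le> exp 1"
  using fact_phi[of m] by auto

lemma phi_split: "phi m = sqrt (real (max m 1)) * exp (X m - real m)"
  by (simp add: phi_def X_def)




lemma main:
  fixes s t n :: nat and V W :: "nat set" and A B :: "nat \<Rightarrow> nat set" and e :: "nat \<Rightarrow> nat \<Rightarrow> nat"
  assumes H: "finite V \<and> finite W \<and> card V = n \<and> card W = n \<and>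
    is_partition V s A \<and> is_partition W t B \<and>
    (\<forall>i\<le>s. (\<Sum>j\<le>t. e i j) = card (A i)) \<and>
    (\<forall>j\<le>t. (\<Sum>i\<le>s. e i j) = card (B j))"
  defines "K \<equiv> exp 1 ^ (s + t + 3 + (s+1)*(t+1))"
  shows "(let a = (\<lambda>i. real (card (A i)));
         b = (\<lambda>j. real (card (B j)));
         \<mu> = (\<lambda>i j. a i * b j / real n);
         \<epsilon> = (\<lambda>i j. real (e i j) / \<mu> i j - 1);
         chi = real n powr (-1/2) *
             sqrt ((\<Prod>i\<le>s. a i) * (\<Prod>j\<le>t. b j) /
                   (\<Prod>p\<in>{p \<in> {..s} \<times> {..t}. e (fst p) (snd p) \<noteq> 0}. real (e (fst p) (snd p))));
         R = chi * exp (- (\<Sum>i\<le>s. \<Sum>j\<le>t. \<mu> i j * bracket (\<epsilon> i j)));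
         P = matching_prob V W s t A B e
     in P \<le> K * R \<and> R \<le> K * P)"
proof -
  from H have finV: "finite V" and finW: "finite W" and cV: "card V = n" and cW: "card W = n"
    and pA: "is_partition V s A" and pB: "is_partition W t B"
    and rows: "\<forall>i\<le>s. (\<Sum>j\<le>t. e i j) = card (A i)" and cols: "\<forall>j\<le>t. (\<Sum>i\<le>s. e i j) = card (B j)"
    by auto
  have neA: "\<forall>i\<le>s. A i \<noteq> {}" and djA: "\<forall>i\<le>s. \<forall>j\<le>s. i \<noteq> j \<longrightarrow> A i \<inter> A j = {}"
    and unA: "(\<Union>i\<le>s. A i) = V" using pA unfolding is_partition_def by auto
  have neB: "\<forall>j\<le>t. B j \<noteq> {}" and djB: "\<forall>i\<le>t. \<forall>j\<le>t. i \<noteq> j \<longrightarrow> B i \<inter> B j = {}"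
    and unB: "(\<Union>j\<le>t. B j) = W" using pB unfolding is_partition_def by auto
  have finA: "finite (A i)" if "i \<le> s" for i using finV unA that by (metis UN_upper atMost_iff finite_subset)
  have finB: "finite (B j)" if "j \<le> t" for j using finW unB that by (metis UN_upper atMost_iff finite_subset)
  have aps: "card (A i) \<ge> 1" if "i \<le> s" for i using finA[OF that] neA that by (simp add: Suc_le_eq card_gt_0_iff)
  have bps: "card (B j) \<ge> 1" if "j \<le> t" for j using finB[OF that] neB that by (simp add: Suc_le_eq card_gt_0_iff)
  have cardA: "card V = (\<Sum>i\<le>s. card (A i))"
    unfolding unA[symmetric] using finA djA by (intro card_UN_disjoint) auto
  have cardB: "card W = (\<Sum>j\<le>t. card (B j))"
    unfolding unB[symmetric] using finB djB by (intro card_UN_disjoint) auto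
  have n1: "n \<ge> 1"
  proof -
    have "card (A 0) \<le> card V" using finV unA by (intro card_mono) auto
    thus ?thesis using aps[of 0] cV by simp
  qed
  have sumA: "(\<Sum>i\<le>s. real (card (A i))) = real n" using cardA cV by (metis of_nat_sum)
  have sumB: "(\<Sum>j\<le>t. real (card (B j))) = real n" using cardB cW by (metis of_nat_sum)
  have sumE: "(\<Sum>i\<le>s. \<Sum>j\<le>t. real (e i j)) = real n"
  proof -
    have "(\<Sum>i\<le>s. \<Sum>j\<le>t. real (e i j)) = (\<Sum>i\<le>s. real (card (A i)))"
      using rows by (intro sum.cong) (auto simp flip: of_nat_sum)
    thus ?thesis using sumA by simp
  qed
  define PA where "PA = (\<Prod>i\<le>s. fact (card (A i)) :: real)"
  define PB where "PB = (\<Prod>j\<le>t. fact (card (B j)) :: real)"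
  define PE where "PE = (\<Prod>i\<le>s. \<Prod>j\<le>t. fact (e i j) :: real)"
  have PEpos: "PE > 0" unfolding PE_def by (intro prod_pos) auto
  have cg: "real (card (good V W s t A B e)) * PE = PA * PB"
    unfolding PA_def PB_def PE_def using finV finW djA unA djB unB rows cols by (intro count_good) auto
  have Pexact: "matching_prob V W s t A B e = PA * PB / (fact n * PE)"
  proof -
    have "matching_prob V W s t A B e = real (card (good V W s t A B e)) / fact n"
      unfolding matching_prob_def good_def using card_PM[OF finV finW cV cW] by simp
    also have "real (card (good V W s t A B e)) = PA * PB / PE" using cg PEpos by (simp add: field_simps)
    finally show ?thesis by simp
  qed
  define F where "F m = fact m / phi m" for m
  have factF: "fact m = F m * phi m" for m unfolding F_def using phi_pos[of m] by simp
  define RA where "RA = (\<Prod>i\<le>s. phi (card (A i)))"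
  define RB where "RB = (\<Prod>j\<le>t. phi (card (B j)))"
  define RE where "RE = (\<Prod>i\<le>s. \<Prod>j\<le>t. phi (e i j))"
  define FA where "FA = (\<Prod>i\<le>s. F (card (A i)))"
  define FB where "FB = (\<Prod>j\<le>t. F (card (B j)))"
  define FE where "FE = (\<Prod>i\<le>s. \<Prod>j\<le>t. F (e i j))"
  have PA': "PA = FA * RA" unfolding PA_def FA_def RA_def factF by (simp add: prod.distrib)
  have PB': "PB = FB * RB" unfolding PB_def FB_def RB_def factF by (simp add: prod.distrib)
  have PE': "PE = FE * RE" unfolding PE_def FE_def RE_def factF by (simp add: prod.distrib)
  have Fpos: "F m \<ge> 1" "F m \<le> exp 1" for m unfolding F_def using F_bounds by auto
  have RApos: "RA > 0" "RB > 0" "RE > 0" unfolding RA_def RB_def RE_def by (auto intro!: prod_pos phi_pos)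
  define Rphi where "Rphi = RA * RB / (phi n * RE)"
  have Rphi_pos: "Rphi > 0" unfolding Rphi_def using RApos phi_pos[of n] by simp
  have Rid: "real n powr (-1/2) *
             sqrt ((\<Prod>i\<le>s. real (card (A i))) * (\<Prod>j\<le>t. real (card (B j))) /
                   (\<Prod>p\<in>{p \<in> {..s} \<times> {..t}. e (fst p) (snd p) \<noteq> 0}. real (e (fst p) (snd p))))
           * exp (- (\<Sum>i\<le>s. \<Sum>j\<le>t. (real (card (A i)) * real (card (B j)) / real n) *
                bracket (real (e i j) / (real (card (A i)) * real (card (B j)) / real n) - 1)))
         = Rphi"
  proof -
    define XA where "XA = (\<Sum>i\<le>s. X (card (A i)))"
    define XB where "XB = (\<Sum>j\<le>t. X (card (B j)))"
    define XE where "XE = (\<Sum>i\<le>s. \<Sum>j\<le>t. X (e i j))"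
    have npos: "real n > 0" using n1 by simp
    have T: "(\<Sum>i\<le>s. \<Sum>j\<le>t. (real (card (A i)) * real (card (B j)) / real n) *
                bracket (real (e i j) / (real (card (A i)) * real (card (B j)) / real n) - 1))
           = XE - XA - XB + X n"
    proof -
      have "(\<Sum>i\<le>s. \<Sum>j\<le>t. (real (card (A i)) * real (card (B j)) / real n) *
                bracket (real (e i j) / (real (card (A i)) * real (card (B j)) / real n) - 1))
          = (\<Sum>i\<le>s. \<Sum>j\<le>t. X (e i j) - real (e i j) * ln (real (card (A i))) - real (e i j) * ln (real (card (B j)))
               + real (e i j) * ln (real n) - real (e i j) + real (card (A i)) * real (card (B j)) / real n)"
      proof (intro sum.cong refl)
        fix i j assume ij: "i \<in> {..s}" "j \<in> {..t}"
        show "(real (card (A i)) * real (card (B j)) / real n) *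
                bracket (real (e i j) / (real (card (A i)) * real (card (B j)) / real n) - 1)
          = X (e i j) - real (e i j) * ln (real (card (A i))) - real (e i j) * ln (real (card (B j)))
               + real (e i j) * ln (real n) - real (e i j) + real (card (A i)) * real (card (B j)) / real n"
          by (rule term_eq) (use aps[of i] bps[of j] ij npos in auto)
      qed
      also have "\<dots> = XE - (\<Sum>i\<le>s. \<Sum>j\<le>t. real (e i j) * ln (real (card (A i))))
            - (\<Sum>i\<le>s. \<Sum>j\<le>t. real (e i j) * ln (real (card (B j))))
            + (\<Sum>i\<le>s. \<Sum>j\<le>t. real (e i j)) * ln (real n) - (\<Sum>i\<le>s. \<Sum>j\<le>t. real (e i j))
            + (\<Sum>i\<le>s. \<Sum>j\<le>t. real (card (A i)) * real (card (B j)) / real n)"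
        unfolding XE_def by (simp add: sum.distrib sum_subtractf sum_distrib_right)
      also have "(\<Sum>i\<le>s. \<Sum>j\<le>t. real (e i j) * ln (real (card (A i)))) = XA"
        unfolding XA_def
      proof (intro sum.cong refl)
        fix i assume i: "i \<in> {..s}"
        have "(\<Sum>j\<le>t. real (e i j) * ln (real (card (A i)))) = (\<Sum>j\<le>t. real (e i j)) * ln (real (card (A i)))"
          by (simp add: sum_distrib_right)
        also have "(\<Sum>j\<le>t. real (e i j)) = real (card (A i))" using rows i by (simp flip: of_nat_sum)
        finally show "(\<Sum>j\<le>t. real (e i j) * ln (real (card (A i)))) = X (card (A i))" by (simp add: X_def)
      qed
      also have "(\<Sum>i\<le>s. \<Sum>j\<le>t. real (e i j) * ln (real (card (B j)))) = XB"
        unfolding XB_def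
      proof (subst sum.swap, intro sum.cong refl)
        fix j assume j: "j \<in> {..t}"
        have "(\<Sum>i\<le>s. real (e i j) * ln (real (card (B j)))) = (\<Sum>i\<le>s. real (e i j)) * ln (real (card (B j)))"
          by (simp add: sum_distrib_right)
        also have "(\<Sum>i\<le>s. real (e i j)) = real (card (B j))" using cols j by (simp flip: of_nat_sum)
        finally show "(\<Sum>i\<le>s. real (e i j) * ln (real (card (B j)))) = X (card (B j))" by (simp add: X_def)
      qed
      also have "(\<Sum>i\<le>s. \<Sum>j\<le>t. real (card (A i)) * real (card (B j)) / real n) = real n"
      proof -
        have "(\<Sum>i\<le>s. \<Sum>j\<le>t. real (card (A i)) * real (card (B j)) / real n)
            = (\<Sum>i\<le>s. real (card (A i)) * (\<Sum>j\<le>t. real (card (B j))) / real n)"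
          by (simp add: sum_distrib_left sum_divide_distrib)
        also have "\<dots> = (\<Sum>i\<le>s. real (card (A i)))" unfolding sumB using npos by simp
        finally show ?thesis using sumA by simp
      qed
      finally show ?thesis unfolding sumE X_def by simp
    qed
    define SA where "SA = (\<Prod>i\<le>s. sqrt (real (max (card (A i)) 1)))"
    define SB where "SB = (\<Prod>j\<le>t. sqrt (real (max (card (B j)) 1)))"
    define SE where "SE = (\<Prod>i\<le>s. \<Prod>j\<le>t. sqrt (real (max (e i j) 1)))"
    have Pf: "(\<Prod>p\<in>{p \<in> {..s} \<times> {..t}. e (fst p) (snd p) \<noteq> 0}. real (e (fst p) (snd p)))
            = (\<Prod>i\<le>s. \<Prod>j\<le>t. real (max (e i j) 1))"
    proof -
      have "(\<Prod>p\<in>{p \<in> {..s} \<times> {..t}. e (fst p) (snd p) \<noteq> 0}. real (e (fst p) (snd p)))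
          = (\<Prod>p\<in>{..s} \<times> {..t}. if e (fst p) (snd p) \<noteq> 0 then real (e (fst p) (snd p)) else 1)"
        by (rule prod.inter_filter) simp
      also have "\<dots> = (\<Prod>p\<in>{..s} \<times> {..t}. real (max (e (fst p) (snd p)) 1))"
        by (intro prod.cong refl) (auto simp: max_def)
      also have "\<dots> = (\<Prod>i\<le>s. \<Prod>j\<le>t. real (max (e i j) 1))"
        by (simp add: prod.cartesian_product case_prod_beta')
      finally show ?thesis .
    qed
    have SAeq: "SA = sqrt (\<Prod>i\<le>s. real (card (A i)))" unfolding SA_def sqrt_prod
    proof (intro prod.cong refl)
      fix i assume "i \<in> {..s}"
      thus "sqrt (real (max (card (A i)) 1)) = sqrt (real (card (A i)))" using aps[of i] by (simp add: max_def)
    qed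
    have SBeq: "SB = sqrt (\<Prod>j\<le>t. real (card (B j)))" unfolding SB_def sqrt_prod
    proof (intro prod.cong refl)
      fix j assume "j \<in> {..t}"
      thus "sqrt (real (max (card (B j)) 1)) = sqrt (real (card (B j)))" using bps[of j] by (simp add: max_def)
    qed
    have SEeq: "SE = sqrt (\<Prod>i\<le>s. \<Prod>j\<le>t. real (max (e i j) 1))" unfolding SE_def by (simp only: sqrt_prod)
    have npow: "real n powr (-1/2) = 1 / sqrt (real n)"
    proof -
      have h: "(-1/2::real) = - (1/2)" by simp
      show ?thesis unfolding h powr_minus using npos by (simp add: powr_half_sqrt inverse_eq_divide)
    qed
    have chi: "real n powr (-1/2) *
             sqrt ((\<Prod>i\<le>s. real (card (A i))) * (\<Prod>j\<le>t. real (card (B j))) /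
                   (\<Prod>p\<in>{p \<in> {..s} \<times> {..t}. e (fst p) (snd p) \<noteq> 0}. real (e (fst p) (snd p))))
         = SA * SB / (sqrt (real n) * SE)"
      unfolding npow Pf SAeq SBeq SEeq by (simp add: real_sqrt_mult real_sqrt_divide)
    have RAe: "RA = SA * exp (XA - real n)"
    proof -
      have "RA = SA * (\<Prod>i\<le>s. exp (X (card (A i)) - real (card (A i))))"
        unfolding RA_def SA_def phi_split by (simp add: prod.distrib)
      also have "(\<Prod>i\<le>s. exp (X (card (A i)) - real (card (A i)))) = exp (XA - real n)"
        unfolding XA_def sumA[symmetric] by (simp add: exp_sum[symmetric] sum_subtractf)
      finally show ?thesis .
    qed
    have RBe: "RB = SB * exp (XB - real n)"
    proof -
      have "RB = SB * (\<Prod>j\<le>t. exp (X (card (B j)) - real (card (B j))))"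
        unfolding RB_def SB_def phi_split by (simp add: prod.distrib)
      also have "(\<Prod>j\<le>t. exp (X (card (B j)) - real (card (B j)))) = exp (XB - real n)"
        unfolding XB_def sumB[symmetric] by (simp add: exp_sum[symmetric] sum_subtractf)
      finally show ?thesis .
    qed
    have REe: "RE = SE * exp (XE - real n)"
    proof -
      have "RE = SE * (\<Prod>i\<le>s. \<Prod>j\<le>t. exp (X (e i j) - real (e i j)))"
        unfolding RE_def SE_def phi_split by (simp add: prod.distrib)
      also have "(\<Prod>i\<le>s. \<Prod>j\<le>t. exp (X (e i j) - real (e i j))) = exp (XE - real n)"
        unfolding XE_def sumE[symmetric] by (simp add: exp_sum[symmetric] sum_subtractf)
      finally show ?thesis .
    qed
    have phin: "phi n = sqrt (real n) * exp (X n - real n)" unfolding phi_split using n1 by (simp add: max_def)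
    have SEpos: "SE > 0" unfolding SE_def by (intro prod_pos) auto
    have "Rphi = SA * SB / (sqrt (real n) * SE) * (exp (XA - real n) * exp (XB - real n) / (exp (X n - real n) * exp (XE - real n)))"
      unfolding Rphi_def RAe RBe REe phin by (simp add: field_simps)
    also have "exp (XA - real n) * exp (XB - real n) / (exp (X n - real n) * exp (XE - real n))
             = exp (- (XE - XA - XB + X n))"
      by (simp add: exp_add[symmetric] exp_diff[symmetric] algebra_simps)
    finally show ?thesis unfolding chi T by simp
  qed
  define Q where "Q = FA * FB / (F n * FE)"
  have PQ: "matching_prob V W s t A B e = Q * Rphi"
    unfolding Pexact Q_def Rphi_def PA' PB' PE' factF[of n] using RApos phi_pos[of n] Fpos[of n]
    by (simp add: field_simps)
  have FA1: "FA \<ge> 1" "FB \<ge> 1" "FE \<ge> 1" unfolding FA_def FB_def FE_def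
    by (auto intro!: prod_ge_1 Fpos)
  have e1: "exp 1 \<ge> (1::real)" by simp
  have FAu: "FA \<le> exp 1 ^ (s+1)" unfolding FA_def
    by (rule prod_le_power) (use Fpos in \<open>auto intro: order_trans[OF zero_le_one]\<close>)
  have FBu: "FB \<le> exp 1 ^ (t+1)" unfolding FB_def
    by (rule prod_le_power) (use Fpos in \<open>auto intro: order_trans[OF zero_le_one]\<close>)
  have FEi: "(\<Prod>j\<le>t. F (e i j)) \<le> exp 1 ^ (t+1)" for i
    by (rule prod_le_power) (use Fpos in \<open>auto intro: order_trans[OF zero_le_one]\<close>)
  have e2: "(1::real) \<le> exp 1 * exp 1 ^ t" using one_le_power[OF e1, of "Suc t"] by simp
  have FEu: "FE \<le> (exp 1 ^ (t+1)) ^ (s+1)" unfolding FE_def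
    by (rule prod_le_power) (use FEi Fpos e2 in \<open>auto intro: order_trans[OF zero_le_one] prod_nonneg\<close>)
  have Qu: "Q \<le> K"
  proof -
    have d1: "F n * FE \<ge> 1" using FA1 Fpos[of n] mult_mono[of 1 "F n" 1 FE] by simp
    have "Q \<le> FA * FB" unfolding Q_def using divide_left_mono[of 1 "F n * FE" "FA*FB"] d1 FA1 by simp
    also have "\<dots> \<le> exp 1 ^ (s+1) * exp 1 ^ (t+1)" using FAu FBu FA1 by (intro mult_mono) auto
    also have "\<dots> = exp 1 ^ (s+t+2)" by (simp add: power_add[symmetric])
    also have "\<dots> \<le> K" unfolding K_def by (intro power_increasing) auto
    finally show ?thesis .
  qed
  have Ql: "1 / Q \<le> K"
  proof -
    have "1 / Q = F n * FE / (FA * FB)" unfolding Q_def by simp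
    also have "\<dots> \<le> F n * FE"
    proof -
      have d1: "FA * FB \<ge> 1" using FA1 mult_mono[of 1 FA 1 FB] by simp
      show ?thesis using divide_left_mono[of 1 "FA * FB" "F n * FE"] d1 FA1 Fpos[of n] by simp
    qed
    also have "\<dots> \<le> exp 1 * (exp 1 ^ (t+1)) ^ (s+1)" using Fpos[of n] FEu FA1 by (intro mult_mono) auto
    also have "\<dots> = exp 1 ^ (Suc ((t+1)*(s+1)))" by (simp only: power_mult power_Suc)
    also have "\<dots> \<le> K" unfolding K_def by (intro power_increasing) auto
    finally show ?thesis .
  qed
  have Qpos: "Q > 0" unfolding Q_def using FA1 Fpos[of n] by simp
  have "matching_prob V W s t A B e \<le> K * Rphi" unfolding PQ using Qu Rphi_pos by simp
  moreover have "Rphi \<le> K * matching_prob V W s t A B e"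
  proof -
    have "Rphi = (1/Q) * (Q * Rphi)" using Qpos by simp
    also have "\<dots> \<le> K * (Q * Rphi)" using Ql Qpos Rphi_pos by (intro mult_right_mono) auto
    finally show ?thesis unfolding PQ .
  qed
  ultimately show ?thesis unfolding Let_def Rid by simp
qed


theorem proposition4p1:
  fixes s t :: nat
  shows "\<exists>C>0. \<forall>(n::nat) (V::nat set) (W::nat set) (A::nat \<Rightarrow> nat set) (B::nat \<Rightarrow> nat set)
           (e::nat \<Rightarrow> nat \<Rightarrow> nat).
    finite V \<and> finite W \<and> card V = n \<and> card W = n \<and>
    is_partition V s A \<and> is_partition W t B \<and>
    (\<forall>i\<le>s. (\<Sum>j\<le>t. e i j) = card (A i)) \<and>
    (\<forall>j\<le>t. (\<Sum>i\<le>s. e i j) = card (B j)) \<longrightarrow>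
    (let a = (\<lambda>i. real (card (A i)));
         b = (\<lambda>j. real (card (B j)));
         \<mu> = (\<lambda>i j. a i * b j / real n);
         \<epsilon> = (\<lambda>i j. real (e i j) / \<mu> i j - 1);
         chi = real n powr (-1/2) *
             sqrt ((\<Prod>i\<le>s. a i) * (\<Prod>j\<le>t. b j) /
                   (\<Prod>p\<in>{p \<in> {..s} \<times> {..t}. e (fst p) (snd p) \<noteq> 0}. real (e (fst p) (snd p))));
         R = chi * exp (- (\<Sum>i\<le>s. \<Sum>j\<le>t. \<mu> i j * bracket (\<epsilon> i j)));
         P = matching_prob V W s t A B e
     in P \<le> C * R \<and> R \<le> C * P)"
  apply (rule exI[of _ "exp 1 ^ (s + t + 3 + (s+1)*(t+1))"])
  apply (intro conjI allI impI)
   apply simp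
  apply (rule main)
  apply assumption
  done

end
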